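(* In the nonatomic base station association game with cost densities $c_{lj}(\mathbf{m})=g_{lj}c(m_j)$, every Nash equilibrium is Pareto efficient; that is, if $\mathbf{m}$ is a Nash equilibrium there is no congestion profile $\mathbf{m}'$ such that $c_{lk}(\mathbf{m}')\le c_{lj}(\mathbf{m})$ for every class $l$ and all BSs $j,k$ with $m_{lj}>0$ and $m'_{lk}>0$, with strict inequality for at least one such triple $(l,j,k)$.
   Context: Nonatomic model: classes $\mathcal{L}=\{1,\dots,L\}$ of nonatomic mobiles, class $l$ having total mass $M_l>0$, target SINR density $\gamma_l>0$ and power gain $h_{lj}>0$ to BS $j\in\mathcal{N}=\{1,\dots,N\}$; noise power $\sigma^2>0$. A congestion profile is $\mathbf{m}=(m_{lj})$ with $m_{lj}\ge0$, $\sum_j m_{lj}=M_l$. Set $m_j=\sum_l\gamma_l m_{lj}$, $g_{lj}=\gamma_l\sigma^2/h_{lj}$, and $c(z)=1/(1-z)$ for $z<1$, $c(z)=\infty$ for $z\ge1$; $c_{lj}(\mathbf{m})=g_{lj}c(m_j)$. $\mathbf{m}$ is a Nash equilibrium if for all $l,j$, $m_{lj}>0$ implies $c_{lj}(\mathbf{m})\le c_{lk}(\mathbf{m})$ for all $k$. Standing feasibility assumption: $\sum_l\gamma_l M_l<N$. *)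

theory Defs
  imports Complex_Main "HOL-Library.Extended_Real"
begin

text \<open>Classes are indexed by {1..L}, base stations by {1..N}.
  A profile is a function m :: nat => nat => real, m l j = mass of class l at BS j.\<close>

definition congestion_profile ::
  "nat \<Rightarrow> nat \<Rightarrow> (nat \<Rightarrow> real) \<Rightarrow> (nat \<Rightarrow> nat \<Rightarrow> real) \<Rightarrow> bool" where
  "congestion_profile L N M m \<longleftrightarrow>
     (\<forall>l\<in>{1..L}. (\<forall>j\<in>{1..N}. m l j \<ge> 0) \<and> (\<Sum>j\<in>{1..N}. m l j) = M l)"

definition load :: "nat \<Rightarrow> (nat \<Rightarrow> real) \<Rightarrow> (nat \<Rightarrow> nat \<Rightarrow> real) \<Rightarrow> nat \<Rightarrow> real" where
  "load L \<gamma> m j = (\<Sum>l\<in>{1..L}. \<gamma> l * m l j)"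

definition cfun :: "real \<Rightarrow> ereal" where
  "cfun z = (if z < 1 then ereal (1 / (1 - z)) else \<infinity>)"

definition gcoef :: "(nat \<Rightarrow> real) \<Rightarrow> real \<Rightarrow> (nat \<Rightarrow> nat \<Rightarrow> real) \<Rightarrow> nat \<Rightarrow> nat \<Rightarrow> real" where
  "gcoef \<gamma> \<sigma>2 h l j = \<gamma> l * \<sigma>2 / h l j"

definition cost ::
  "nat \<Rightarrow> (nat \<Rightarrow> real) \<Rightarrow> real \<Rightarrow> (nat \<Rightarrow> nat \<Rightarrow> real) \<Rightarrow> (nat \<Rightarrow> nat \<Rightarrow> real) \<Rightarrow> nat \<Rightarrow> nat \<Rightarrow> ereal" where
  "cost L \<gamma> \<sigma>2 h m l j = ereal (gcoef \<gamma> \<sigma>2 h l j) * cfun (load L \<gamma> m j)"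

definition nash_equilibrium ::
  "nat \<Rightarrow> nat \<Rightarrow> (nat \<Rightarrow> real) \<Rightarrow> (nat \<Rightarrow> real) \<Rightarrow> real \<Rightarrow> (nat \<Rightarrow> nat \<Rightarrow> real) \<Rightarrow> (nat \<Rightarrow> nat \<Rightarrow> real) \<Rightarrow> bool" where
  "nash_equilibrium L N M \<gamma> \<sigma>2 h m \<longleftrightarrow>
     congestion_profile L N M m \<and>
     (\<forall>l\<in>{1..L}. \<forall>j\<in>{1..N}. m l j > 0 \<longrightarrow>
        (\<forall>k\<in>{1..N}. cost L \<gamma> \<sigma>2 h m l j \<le> cost L \<gamma> \<sigma>2 h m l k))"

definition pareto_dominates ::
  "nat \<Rightarrow> nat \<Rightarrow> (nat \<Rightarrow> real) \<Rightarrow> real \<Rightarrow> (nat \<Rightarrow> nat \<Rightarrow> real) \<Rightarrow> (nat \<Rightarrow> nat \<Rightarrow> real) \<Rightarrow> (nat \<Rightarrow> nat \<Rightarrow> real) \<Rightarrow> bool" where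
  "pareto_dominates L N \<gamma> \<sigma>2 h m' m \<longleftrightarrow>
     (\<forall>l\<in>{1..L}. \<forall>j\<in>{1..N}. \<forall>k\<in>{1..N}. m l j > 0 \<and> m' l k > 0 \<longrightarrow>
        cost L \<gamma> \<sigma>2 h m' l k \<le> cost L \<gamma> \<sigma>2 h m l j) \<and>
     (\<exists>l\<in>{1..L}. \<exists>j\<in>{1..N}. \<exists>k\<in>{1..N}. m l j > 0 \<and> m' l k > 0 \<and>
        cost L \<gamma> \<sigma>2 h m' l k < cost L \<gamma> \<sigma>2 h m l j)"

end

theory Submission
  imports Defs
begin

lemma cost_fin: "g > 0 \<Longrightarrow> z < 1 \<Longrightarrow> ereal g * cfun z = ereal (g / (1 - z))"
  by (simp add: cfun_def)

lemma cost_inf: "g > 0 \<Longrightarrow> \<not> z < 1 \<Longrightarrow> ereal g * cfun z = \<infinity>"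
  by (simp add: cfun_def)

lemma cost_mono_inv:
  assumes g: "(g::real) > 0" and w: "w < 1" and le: "ereal g * cfun z \<le> ereal g * cfun w"
  shows "z \<le> w"
proof (cases "z < 1")
  case True
  with le g w have "g / (1 - z) \<le> g / (1 - w)" by (simp add: cost_fin)
  have "z \<le> w"
  proof (rule ccontr)
    assume "\<not> z \<le> w"
    hence "1 - z < 1 - w" by simp
    hence "g / (1 - w) < g / (1 - z)" using g True by (intro divide_strict_left_mono) auto
    with \<open>g / (1 - z) \<le> g / (1 - w)\<close> show False by simp
  qed
  thus ?thesis by simp
next
  case False
  have "ereal g * cfun z = \<infinity>" using cost_inf[OF g False] .
  moreover have "ereal g * cfun w = ereal (g / (1 - w))" using cost_fin[OF g w] .
  ultimately have "(\<infinity>::ereal) \<le> ereal (g / (1 - w))" using le by metis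
  thus ?thesis by simp
qed

lemma sum_load:
  assumes "congestion_profile L N M m"
  shows "(\<Sum>j\<in>{1..N}. load L \<gamma> m j) = (\<Sum>l\<in>{1..L}. \<gamma> l * M l)"
proof -
  have "(\<Sum>j\<in>{1..N}. load L \<gamma> m j) = (\<Sum>l\<in>{1..L}. \<gamma> l * (\<Sum>j\<in>{1..N}. m l j))"
    unfolding load_def by (subst sum.swap) (simp add: sum_distrib_left)
  also have "\<dots> = (\<Sum>l\<in>{1..L}. \<gamma> l * M l)"
    using assms unfolding congestion_profile_def by simp
  finally show ?thesis .
qed

lemma load_nonneg:
  assumes "congestion_profile L N M m" "\<forall>l\<in>{1..L}. \<gamma> l > 0" "j \<in> {1..N}"
  shows "load L \<gamma> m j \<ge> 0"
  using assms unfolding load_def congestion_profile_def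
  by (intro sum_nonneg) (simp add: less_imp_le)

lemma load_pos_ex:
  assumes "congestion_profile L N M m" "\<forall>l\<in>{1..L}. \<gamma> l > 0" "j \<in> {1..N}"
    and "load L \<gamma> m j > 0"
  shows "\<exists>l\<in>{1..L}. m l j > 0"
proof (rule ccontr)
  assume nx: "\<not> (\<exists>l\<in>{1..L}. m l j > 0)"
  have "\<forall>l\<in>{1..L}. m l j = 0"
  proof
    fix l assume l: "l \<in> {1..L}"
    have "m l j \<ge> 0" using assms(1,3) l unfolding congestion_profile_def by blast
    moreover have "\<not> m l j > 0" using nx l by blast
    ultimately show "m l j = 0" by linarith
  qed
  hence "load L \<gamma> m j = 0" unfolding load_def by simp
  with assms(4) show False by simp
qed

theorem proposition10:
  fixes L N :: nat and M \<gamma> :: "nat \<Rightarrow> real" and h :: "nat \<Rightarrow> nat \<Rightarrow> real"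
    and \<sigma>2 :: real and m :: "nat \<Rightarrow> nat \<Rightarrow> real"
  assumes M_pos: "\<forall>l\<in>{1..L}. M l > 0"
    and \<gamma>_pos: "\<forall>l\<in>{1..L}. \<gamma> l > 0"
    and h_pos: "\<forall>l\<in>{1..L}. \<forall>j\<in>{1..N}. h l j > 0"
    and \<sigma>_pos: "\<sigma>2 > 0"
    and feasible: "(\<Sum>l\<in>{1..L}. \<gamma> l * M l) < real N"
    and NE: "nash_equilibrium L N M \<gamma> \<sigma>2 h m"
  shows "\<not> (\<exists>m'. congestion_profile L N M m' \<and> pareto_dominates L N \<gamma> \<sigma>2 h m' m)"
proof
  assume "\<exists>m'. congestion_profile L N M m' \<and> pareto_dominates L N \<gamma> \<sigma>2 h m' m"
  then obtain m' where cp': "congestion_profile L N M m'"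
    and dom: "pareto_dominates L N \<gamma> \<sigma>2 h m' m" by blast
  have cp: "congestion_profile L N M m" and ne:
    "\<And>l j k. l\<in>{1..L} \<Longrightarrow> j\<in>{1..N} \<Longrightarrow> k\<in>{1..N} \<Longrightarrow> m l j > 0 \<Longrightarrow>
        cost L \<gamma> \<sigma>2 h m l j \<le> cost L \<gamma> \<sigma>2 h m l k"
    using NE unfolding nash_equilibrium_def by auto
  have gpos: "\<And>l j. l\<in>{1..L} \<Longrightarrow> j\<in>{1..N} \<Longrightarrow> gcoef \<gamma> \<sigma>2 h l j > 0"
    unfolding gcoef_def using \<gamma>_pos h_pos \<sigma>_pos by auto
  have mnn: "\<And>l j. l\<in>{1..L} \<Longrightarrow> j\<in>{1..N} \<Longrightarrow> m l j \<ge> 0"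
    using cp unfolding congestion_profile_def by auto
  have Msum: "\<And>l. l\<in>{1..L} \<Longrightarrow> (\<Sum>j\<in>{1..N}. m l j) = M l"
    using cp unfolding congestion_profile_def by auto
  have lt1: "\<And>k. k\<in>{1..N} \<Longrightarrow> load L \<gamma> m k < 1"
  proof (rule ccontr)
    fix k assume k: "k\<in>{1..N}" and nk: "\<not> load L \<gamma> m k < 1"
    have "load L \<gamma> m k > 0" using nk by simp
    then obtain l where l: "l\<in>{1..L}" "m l k > 0"
      using load_pos_ex[OF cp \<gamma>_pos k] by blast
    have ck: "cost L \<gamma> \<sigma>2 h m l k = \<infinity>"
      unfolding cost_def using cost_inf[OF gpos[OF l(1) k] nk] .
    have all: "\<forall>i\<in>{1..N}. load L \<gamma> m i \<ge> 1"
    proof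
      fix i assume i: "i\<in>{1..N}"
      have "cost L \<gamma> \<sigma>2 h m l i = \<infinity>" using ne[OF l(1) k i l(2)] ck by simp
      thus "load L \<gamma> m i \<ge> 1"
        unfolding cost_def using cost_fin[OF gpos[OF l(1) i]] by (cases "load L \<gamma> m i < 1") auto
    qed
    have "real N = (\<Sum>i\<in>{1..N}. (1::real))" by simp
    also have "\<dots> \<le> (\<Sum>i\<in>{1..N}. load L \<gamma> m i)" using all by (intro sum_mono) auto
    also have "\<dots> = (\<Sum>l\<in>{1..L}. \<gamma> l * M l)" using sum_load[OF cp] .
    finally show False using feasible by simp
  qed
  have le: "\<And>k. k\<in>{1..N} \<Longrightarrow> load L \<gamma> m' k \<le> load L \<gamma> m k"
  proof -
    fix k assume k: "k\<in>{1..N}"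
    show "load L \<gamma> m' k \<le> load L \<gamma> m k"
    proof (cases "load L \<gamma> m' k > 0")
      case False
      thus ?thesis using load_nonneg[OF cp \<gamma>_pos k] by simp
    next
      case True
      then obtain l where l: "l\<in>{1..L}" "m' l k > 0"
        using load_pos_ex[OF cp' \<gamma>_pos k] by blast
      have "\<exists>j\<in>{1..N}. m l j > 0"
      proof (rule ccontr)
        assume nx: "\<not> (\<exists>j\<in>{1..N}. m l j > 0)"
        have "\<forall>j\<in>{1..N}. m l j = 0"
        proof
          fix j assume j: "j \<in> {1..N}"
          have "m l j \<ge> 0" using mnn[OF l(1) j] .
          moreover have "\<not> m l j > 0" using nx j by blast
          ultimately show "m l j = 0" by linarith
        qed
        hence "M l = 0" using Msum[OF l(1)] by simp
        moreover have "M l > 0" using M_pos l(1) by blast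
        ultimately show False by simp
      qed
      then obtain j where j: "j\<in>{1..N}" "m l j > 0" by blast
      have "cost L \<gamma> \<sigma>2 h m' l k \<le> cost L \<gamma> \<sigma>2 h m l j"
        using dom l j k unfolding pareto_dominates_def by blast
      also have "\<dots> \<le> cost L \<gamma> \<sigma>2 h m l k" using ne[OF l(1) j(1) k j(2)] .
      finally show ?thesis unfolding cost_def
        using cost_mono_inv[OF gpos[OF l(1) k] lt1[OF k]] by blast
    qed
  qed
  have eq: "\<And>k. k\<in>{1..N} \<Longrightarrow> load L \<gamma> m' k = load L \<gamma> m k"
  proof (rule ccontr)
    fix k assume k: "k\<in>{1..N}" and ne': "load L \<gamma> m' k \<noteq> load L \<gamma> m k"
    hence lt: "load L \<gamma> m' k < load L \<gamma> m k" using le[OF k] by simp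
    have "(\<Sum>i\<in>{1..N}. load L \<gamma> m' i) < (\<Sum>i\<in>{1..N}. load L \<gamma> m i)"
    proof (rule sum_strict_mono_ex1)
      show "\<forall>i\<in>{1..N}. load L \<gamma> m' i \<le> load L \<gamma> m i" using le by blast
      show "\<exists>i\<in>{1..N}. load L \<gamma> m' i < load L \<gamma> m i" using k lt by blast
    qed simp
    thus False using sum_load[OF cp] sum_load[OF cp'] by simp
  qed
  from dom obtain l j k where l: "l\<in>{1..L}" and j: "j\<in>{1..N}" and k: "k\<in>{1..N}"
    and mj: "m l j > 0" and lt: "cost L \<gamma> \<sigma>2 h m' l k < cost L \<gamma> \<sigma>2 h m l j"
    unfolding pareto_dominates_def by blast
  have "cost L \<gamma> \<sigma>2 h m l j \<le> cost L \<gamma> \<sigma>2 h m l k" using ne[OF l j k mj] .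
  also have "\<dots> = cost L \<gamma> \<sigma>2 h m' l k" unfolding cost_def using eq[OF k] by simp
  finally show False using lt leD by blast
qed

end
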